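(* Let $P$ be an $n\times n$ complex matrix and let $S_P: M_n\to M_n$ be the Schur product map $S_P(B)=P\circ B$. Then $S_P$ is PPT if and only if $P\ge 0$ and $P$ is diagonal.
   Context: For $A=(a_{i,j}),B=(b_{i,j})$ of the same size, the Schur product is $A\circ B=(a_{i,j}b_{i,j})$. A linear map is completely positive (CP) if $\phi\otimes \mathrm{id}_k$ is positive for all $k$. A CP map $\phi: M_n\to M_n$ is PPT if $T\circ\phi$ is CP, where $T$ is the transpose map on $M_n$. *)

theory Defs
  imports Complex_Main "Jordan_Normal_Form.Matrix"
begin

definition psd :: "nat \<Rightarrow> complex mat \<Rightarrow> bool" where
  "psd n A \<longleftrightarrow> A \<in> carrier_mat n n
     \<and> (\<forall>i<n. \<forall>j<n. A $$ (i,j) = cnj (A $$ (j,i)))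
     \<and> (\<forall>x :: nat \<Rightarrow> complex.
          let q = (\<Sum>i<n. \<Sum>j<n. cnj (x i) * A $$ (i,j) * x j)
          in Im q = 0 \<and> Re q \<ge> 0)"

definition positive_map :: "nat \<Rightarrow> (complex mat \<Rightarrow> complex mat) \<Rightarrow> bool" where
  "positive_map n \<phi> \<longleftrightarrow> (\<forall>A. psd n A \<longrightarrow> psd n (\<phi> A))"

text \<open>The n x n block (a,b) of a (k*n) x (k*n) matrix X, viewing X as an element of M_k(M_n).\<close>
definition block :: "nat \<Rightarrow> complex mat \<Rightarrow> nat \<Rightarrow> nat \<Rightarrow> complex mat" where
  "block n X a b = mat n n (\<lambda>(i,j). X $$ (a*n + i, b*n + j))"

text \<open>phi (x) id_k acting on M_k(M_n) = M_n (x) M_k, blockwise.\<close>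
definition ampliation :: "nat \<Rightarrow> nat \<Rightarrow> (complex mat \<Rightarrow> complex mat) \<Rightarrow> complex mat \<Rightarrow> complex mat" where
  "ampliation n k \<phi> X = mat (k*n) (k*n)
     (\<lambda>(p,q). \<phi> (block n X (p div n) (q div n)) $$ (p mod n, q mod n))"

definition completely_positive :: "nat \<Rightarrow> (complex mat \<Rightarrow> complex mat) \<Rightarrow> bool" where
  "completely_positive n \<phi> \<longleftrightarrow>
     (\<forall>k. \<forall>X. psd (k*n) X \<longrightarrow> psd (k*n) (ampliation n k \<phi> X))"

definition PPT :: "nat \<Rightarrow> (complex mat \<Rightarrow> complex mat) \<Rightarrow> bool" where
  "PPT n \<phi> \<longleftrightarrow> completely_positive n \<phi> \<and> completely_positive n (transpose_mat \<circ> \<phi>)"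

definition schur_prod :: "complex mat \<Rightarrow> complex mat \<Rightarrow> complex mat" where
  "schur_prod A B = mat (dim_row A) (dim_col A) (\<lambda>(i,j). A $$ (i,j) * B $$ (i,j))"

end

theory Submission imports Defs begin

lemma mult_if10 [simp]: "(a::complex) * (if c then 1 else 0) = (if c then a else 0)"
  by simp

lemma psd_diag_entry:
  assumes "psd n P" "r < n"
  shows "Im (P $$ (r,r)) = 0 \<and> Re (P $$ (r,r)) \<ge> 0"
proof -
  from assms(1) have H: "\<forall>x. let q = (\<Sum>i<n. \<Sum>j<n. cnj (x i) * P $$ (i,j) * x j) in Im q = 0 \<and> Re q \<ge> 0"
    unfolding psd_def by blast
  have "let q = (\<Sum>i<n. \<Sum>j<n. cnj ((\<lambda>i. if i = r then 1 else 0) i) * P $$ (i,j) * (\<lambda>i. if i = r then (1::complex) else 0) j)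
          in Im q = 0 \<and> Re q \<ge> 0" by (rule spec[OF H])
  moreover have "(\<Sum>i<n. \<Sum>j<n. cnj ((\<lambda>i. if i = r then 1 else 0) i) * P $$ (i,j) * (\<lambda>i. if i = r then (1::complex) else 0) j) = P $$ (r,r)"
  proof -
    have "(\<Sum>i<n. \<Sum>j<n. cnj ((\<lambda>i. if i = r then 1 else 0) i) * P $$ (i,j) * (\<lambda>i. if i = r then (1::complex) else 0) j)
       = (\<Sum>i<n. if i = r then (\<Sum>j<n. if j = r then P $$ (i,j) else 0) else 0)"
    proof (intro sum.cong refl)
      fix i assume "i \<in> {..<n}"
      show "(\<Sum>j<n. cnj ((\<lambda>i. if i = r then 1 else 0) i) * P $$ (i,j) * (\<lambda>i. if i = r then (1::complex) else 0) j)
         = (if i = r then (\<Sum>j<n. if j = r then P $$ (i,j) else 0) else 0)"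
        by (cases "i = r") (auto intro: sum.cong)
    qed
    also have "\<dots> = (\<Sum>j<n. if j = r then P $$ (r,j) else 0)" using assms(2) by simp
    also have "\<dots> = P $$ (r,r)" using assms(2) by simp
    finally show ?thesis .
  qed
  ultimately show ?thesis unfolding Let_def by (simp only:)
qed

lemma psd_Y:
  assumes P: "psd n P" and X: "psd (k*n) X"
  shows "psd (k*n) (mat (k*n) (k*n) (\<lambda>(p,q). if p mod n = q mod n then P $$ (p mod n, p mod n) * X $$ (p,q) else 0))"
    (is "psd _ ?Y")
  unfolding psd_def Let_def
proof (intro conjI allI impI)
  show "?Y \<in> carrier_mat (k*n) (k*n)" by simp
next
  fix p q assume pq: "p < k*n" "q < k*n"
  have n: "n > 0" using pq by (cases n) auto
  have d: "P $$ (p mod n, p mod n) = cnj (P $$ (p mod n, p mod n))"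
    using psd_diag_entry[OF P, of "p mod n"] n by (simp add: complex_eq_iff)
  have "X $$ (p,q) = cnj (X $$ (q,p))" using X pq unfolding psd_def by blast
  then show "?Y $$ (p,q) = cnj (?Y $$ (q,p))" using pq d by auto
next
  fix x :: "nat \<Rightarrow> complex"
  define N where "N = k*n"
  define y where "y r p = (if p mod n = r then x p else 0)" for r p
  define Q where "Q r = (\<Sum>p<N. \<Sum>q<N. cnj (y r p) * X $$ (p,q) * y r q)" for r
  have e: "(\<Sum>p<N. \<Sum>q<N. cnj (x p) * ?Y $$ (p,q) * x q) = (\<Sum>r<n. P $$ (r,r) * Q r)"
  proof -
    have "(\<Sum>r<n. P $$ (r,r) * Q r) = (\<Sum>r<n. \<Sum>p<N. \<Sum>q<N. P $$ (r,r) * (cnj (y r p) * X $$ (p,q) * y r q))"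
      unfolding Q_def by (simp add: sum_distrib_left)
    also have "\<dots> = (\<Sum>p<N. \<Sum>q<N. \<Sum>r<n. P $$ (r,r) * (cnj (y r p) * X $$ (p,q) * y r q))"
      by (simp add: sum.swap[where A="{..<n}"])
    also have "\<dots> = (\<Sum>p<N. \<Sum>q<N. cnj (x p) * ?Y $$ (p,q) * x q)"
    proof (intro sum.cong refl)
      fix p q assume p: "p \<in> {..<N}" and q: "q \<in> {..<N}"
      then have n: "n > 0" unfolding N_def by (cases n) auto
      have "(\<Sum>r<n. P $$ (r,r) * (cnj (y r p) * X $$ (p,q) * y r q))
          = (\<Sum>r<n. if r = p mod n then (if p mod n = q mod n then P $$ (p mod n, p mod n) * (cnj (x p) * X $$ (p,q) * x q) else 0) else 0)"
        by (intro sum.cong refl) (auto simp: y_def)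
      also have "\<dots> = (if p mod n = q mod n then P $$ (p mod n, p mod n) * (cnj (x p) * X $$ (p,q) * x q) else 0)"
        using n by (simp add: sum.delta')
      also have "\<dots> = cnj (x p) * ?Y $$ (p,q) * x q"
        using p q unfolding N_def by auto
      finally show "(\<Sum>r<n. P $$ (r,r) * (cnj (y r p) * X $$ (p,q) * y r q)) = cnj (x p) * ?Y $$ (p,q) * x q" .
    qed
    finally show ?thesis by simp
  qed
  have t: "Im (P $$ (r,r) * Q r) = 0 \<and> Re (P $$ (r,r) * Q r) \<ge> 0" if r: "r < n" for r
  proof -
    have a: "Im (P $$ (r,r)) = 0 \<and> Re (P $$ (r,r)) \<ge> 0" using psd_diag_entry[OF P r] .
    have b: "Im (Q r) = 0 \<and> Re (Q r) \<ge> 0" using X unfolding psd_def Let_def Q_def N_def by blast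
    show ?thesis using a b by simp
  qed
  show "Im (\<Sum>i<k*n. \<Sum>j<k*n. cnj (x i) * ?Y $$ (i,j) * x j) = 0"
    using e t unfolding N_def[symmetric] by (simp add: Im_sum)
  have "0 \<le> Re (\<Sum>r<n. P $$ (r,r) * Q r)"
    unfolding Re_sum by (rule sum_nonneg) (use t in blast)
  then show "0 \<le> Re (\<Sum>i<k*n. \<Sum>j<k*n. cnj (x i) * ?Y $$ (i,j) * x j)"
    using e unfolding N_def by simp
qed
lemma psd_rank1:
  fixes v :: "nat \<Rightarrow> real"
  shows "psd m (mat m m (\<lambda>(p,q). complex_of_real (v p * v q)))"
  unfolding psd_def Let_def
proof (intro conjI allI impI)
  fix x :: "nat \<Rightarrow> complex"
  define z where "z = (\<Sum>j<m. of_real (v j) * x j)"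
  have e: "(\<Sum>i<m. \<Sum>j<m. cnj (x i) * mat m m (\<lambda>(p,q). complex_of_real (v p * v q)) $$ (i,j) * x j)
     = cnj z * z"
    unfolding z_def by (simp add: sum_product sum_distrib_left mult_ac)
  have "Im (cnj z * z) = 0 \<and> Re (cnj z * z) \<ge> 0" by simp
  then show "Im (\<Sum>i<m. \<Sum>j<m. cnj (x i) * mat m m (\<lambda>(p,q). complex_of_real (v p * v q)) $$ (i,j) * x j) = 0"
    "0 \<le> Re (\<Sum>i<m. \<Sum>j<m. cnj (x i) * mat m m (\<lambda>(p,q). complex_of_real (v p * v q)) $$ (i,j) * x j)"
    unfolding e by auto
qed auto

lemma schur_entry:
  assumes "P \<in> carrier_mat n n" "i < n" "j < n"
  shows "schur_prod P B $$ (i,j) = P $$ (i,j) * B $$ (i,j)"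
  using assms unfolding schur_prod_def by auto

lemma block_entry:
  assumes "i < n" "j < n"
  shows "block n X a b $$ (i,j) = X $$ (a*n+i, b*n+j)"
  using assms unfolding block_def by auto

lemma mod_lt_nk: "(p::nat) < k*n \<Longrightarrow> p mod n < n"
  by (cases "n = 0") auto

lemma amp_eq_Y:
  assumes P: "P \<in> carrier_mat n n" and D: "diagonal_mat P"
    and f: "f = (\<lambda>B. schur_prod P B) \<or> f = transpose_mat \<circ> (\<lambda>B. schur_prod P B)"
  shows "ampliation n k f X = mat (k*n) (k*n) (\<lambda>(p,q). if p mod n = q mod n then P $$ (p mod n, p mod n) * X $$ (p,q) else 0)"
proof (rule eq_matI)
  fix p q assume p: "p < dim_row (mat (k*n) (k*n) (\<lambda>(p,q). if p mod n = q mod n then P $$ (p mod n, p mod n) * X $$ (p,q) else 0))"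
    and q: "q < dim_col (mat (k*n) (k*n) (\<lambda>(p,q). if p mod n = q mod n then P $$ (p mod n, p mod n) * X $$ (p,q) else 0))"
  have p': "p < k*n" and q': "q < k*n" using p q by auto
  have i: "p mod n < n" and j: "q mod n < n" using mod_lt_nk p' q' by auto
  have pe: "p div n * n + p mod n = p" and qe: "q div n * n + q mod n = q" by simp_all
  have Pij: "P $$ (p mod n, q mod n) = (if p mod n = q mod n then P $$ (p mod n, p mod n) else 0)"
    "P $$ (q mod n, p mod n) = (if p mod n = q mod n then P $$ (p mod n, p mod n) else 0)"
    using D P i j unfolding diagonal_mat_def by auto
  have sp: "schur_prod P B \<in> carrier_mat n n" for B using P unfolding schur_prod_def by auto
  have "f (block n X (p div n) (q div n)) $$ (p mod n, q mod n)
     = (if p mod n = q mod n then P $$ (p mod n, p mod n) * X $$ (p,q) else 0)"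
    using f
  proof
    assume "f = (\<lambda>B. schur_prod P B)"
    then show ?thesis using schur_entry[OF P i j] block_entry[OF i j] Pij pe qe by simp
  next
    assume "f = transpose_mat \<circ> (\<lambda>B. schur_prod P B)"
    moreover have "p mod n = q mod n \<Longrightarrow> p div n * n + q mod n = p \<and> q div n * n + p mod n = q"
      using pe qe by simp
    ultimately show ?thesis using schur_entry[OF P j i] block_entry[OF j i] Pij sp[of "block n X (p div n) (q div n)"] i j
      by (auto simp: index_transpose_mat)
  qed
  then show "ampliation n k f X $$ (p,q) = mat (k*n) (k*n) (\<lambda>(p,q). if p mod n = q mod n then P $$ (p mod n, p mod n) * X $$ (p,q) else 0) $$ (p,q)"
    using p' q' unfolding ampliation_def by simp
qed (auto simp: ampliation_def)

lemma suff:
  assumes P: "P \<in> carrier_mat n n" and D: "diagonal_mat P" and S: "psd n P"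
    and f: "f = (\<lambda>B. schur_prod P B) \<or> f = transpose_mat \<circ> (\<lambda>B. schur_prod P B)"
  shows "completely_positive n f"
  unfolding completely_positive_def
  using amp_eq_Y[OF P D f] psd_Y[OF S] by auto

lemma sum_two:
  fixes f :: "nat \<Rightarrow> complex"
  assumes "a < N" "b < N" "a \<noteq> b"
  shows "(\<Sum>q<N. f q * (if q = a then u else if q = b then w else 0)) = f a * u + f b * w"
proof -
  have "(\<Sum>q<N. f q * (if q = a then u else if q = b then w else 0))
      = (\<Sum>q<N. (if q = a then f a * u else 0) + (if q = b then f b * w else 0))"
    using assms by (intro sum.cong refl) auto
  also have "\<dots> = f a * u + f b * w" using assms by (simp add: sum.distrib)
  finally show ?thesis .
qed

lemma quad2:
  fixes M :: "complex mat"
  assumes "a < N" "b < N" "a \<noteq> b"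
  shows "(\<Sum>p<N. \<Sum>q<N. cnj ((\<lambda>p. if p = a then 1 else if p = b then - c else 0) p) * M $$ (p,q)
            * (\<lambda>p. if p = a then 1 else if p = b then - c else 0) q)
     = M $$ (a,a) - c * M $$ (a,b) - cnj c * M $$ (b,a) + cnj c * c * M $$ (b,b)"
proof -
  have "(\<Sum>p<N. \<Sum>q<N. cnj ((\<lambda>p. if p = a then 1 else if p = b then - c else 0) p) * M $$ (p,q)
            * (\<lambda>p. if p = a then 1 else if p = b then - c else 0) q)
      = (\<Sum>p<N. (M $$ (p,a) - c * M $$ (p,b)) * (if p = a then 1 else if p = b then - cnj c else 0))"
  proof (intro sum.cong refl)
    fix p
    have "(\<Sum>q<N. cnj ((\<lambda>p. if p = a then 1 else if p = b then - c else 0) p) * M $$ (p,q)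
            * (\<lambda>p. if p = a then 1 else if p = b then - c else 0) q)
       = cnj ((\<lambda>p. if p = a then 1 else if p = b then - c else 0) p) * (\<Sum>q<N. M $$ (p,q)
            * (if q = a then 1 else if q = b then - c else 0))"
      by (simp add: sum_distrib_left mult.assoc)
    also have "\<dots> = cnj ((\<lambda>p. if p = a then 1 else if p = b then - c else 0) p) * (M $$ (p,a) - c * M $$ (p,b))"
      using sum_two[OF assms] by simp
    also have "\<dots> = (M $$ (p,a) - c * M $$ (p,b)) * (if p = a then 1 else if p = b then - cnj c else 0)"
      by simp
    finally show "(\<Sum>q<N. cnj ((\<lambda>p. if p = a then 1 else if p = b then - c else 0) p) * M $$ (p,q)
            * (\<lambda>p. if p = a then 1 else if p = b then - c else 0) q) = (M $$ (p,a) - c * M $$ (p,b)) * (if p = a then 1 else if p = b then - cnj c else 0)" .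
  qed
  also have "\<dots> = (M $$ (a,a) - c * M $$ (a,b)) - (M $$ (b,a) - c * M $$ (b,b)) * cnj c"
    using sum_two[OF assms, of "\<lambda>p. M $$ (p,a) - c * M $$ (p,b)"] by simp
  finally show ?thesis by (simp add: algebra_simps)
qed

lemma nec_psd:
  assumes P: "P \<in> carrier_mat n n" and C: "completely_positive n (\<lambda>B. schur_prod P B)"
  shows "psd n P"
proof -
  define X where "X = mat (1*n) (1*n) (\<lambda>(p,q). complex_of_real ((\<lambda>_. 1) p * (\<lambda>_. 1) q))"
  have "psd (1*n) X" unfolding X_def by (rule psd_rank1)
  then have "psd (1*n) (ampliation n 1 (\<lambda>B. schur_prod P B) X)" using C unfolding completely_positive_def by blast
  moreover have "ampliation n 1 (\<lambda>B. schur_prod P B) X = P"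
  proof (rule eq_matI)
    fix p q assume "p < dim_row P" "q < dim_col P"
    then have p: "p < n" and q: "q < n" using P by auto
    show "ampliation n 1 (\<lambda>B. schur_prod P B) X $$ (p,q) = P $$ (p,q)"
      using p q schur_entry[OF P p q] block_entry[OF p q]
      unfolding ampliation_def X_def by simp
  qed (use P in \<open>auto simp: ampliation_def\<close>)
  ultimately show ?thesis by simp
qed

lemma lt_sq: "(a::nat) < n \<Longrightarrow> b < n \<Longrightarrow> a*n+b < n*n"
proof -
  assume "a < n" "b < n"
  then have "a*n + b < a*n + n" by simp
  also have "\<dots> = Suc a * n" by simp
  also have "\<dots> \<le> n * n" using \<open>a < n\<close> by (intro mult_le_mono1) simp
  finally show ?thesis .
qed

lemma nec_diag:
  assumes P: "P \<in> carrier_mat n n" and S: "psd n P"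
    and C: "completely_positive n (transpose_mat \<circ> (\<lambda>B. schur_prod P B))"
  shows "diagonal_mat P"
  unfolding diagonal_mat_def
proof (intro allI impI)
  fix i j assume i': "i < dim_row P" and j': "j < dim_col P" and ij: "i \<noteq> j"
  have i: "i < n" and j: "j < n" using i' j' P by auto
  define v where "v p = (if p div n = p mod n then 1 else 0 :: real)" for p
  define X where "X = mat (n*n) (n*n) (\<lambda>(p,q). complex_of_real (v p * v q))"
  define Y where "Y = ampliation n n (transpose_mat \<circ> (\<lambda>B. schur_prod P B)) X"
  have "psd (n*n) X" unfolding X_def by (rule psd_rank1)
  then have Yp: "psd (n*n) Y" using C unfolding completely_positive_def Y_def by blast
  have vv: "v (a*n+b) = (if a = b then 1 else 0)" if "b < n" for a b
    using that unfolding v_def by simp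
  have sp: "schur_prod P B \<in> carrier_mat n n" for B using P unfolding schur_prod_def by auto
  have Yent: "Y $$ (a*n+b, c*n+d) = P $$ (d,b) * complex_of_real (v (a*n+d) * v (c*n+b))"
    if "a < n" "b < n" "c < n" "d < n" for a b c d
  proof -
    have lt: "a*n+d < n*n" "c*n+b < n*n" using lt_sq that by auto
    have dm: "(a*n+b) div n = a" "(a*n+b) mod n = b" "(c*n+d) div n = c" "(c*n+d) mod n = d"
      using that by auto
    have "Y $$ (a*n+b, c*n+d) = transpose_mat (schur_prod P (block n X a c)) $$ (b,d)"
      unfolding Y_def ampliation_def using lt_sq that dm by simp
    also have "\<dots> = schur_prod P (block n X a c) $$ (d,b)"
      using sp[of "block n X a c"] that by (intro index_transpose_mat) auto
    also have "\<dots> = P $$ (d,b) * X $$ (a*n+d, c*n+b)"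
      using schur_entry[OF P, of d b] block_entry[of d n b] that by simp
    also have "\<dots> = P $$ (d,b) * complex_of_real (v (a*n+d) * v (c*n+b))"
      using lt unfolding X_def by simp
    finally show ?thesis .
  qed
  define p1 where "p1 = j*n+i"
  define p2 where "p2 = i*n+j"
  define z where "z = P $$ (j,i)"
  have p1: "p1 < n*n" and p2: "p2 < n*n" unfolding p1_def p2_def using lt_sq i j by auto
  have p12: "p1 \<noteq> p2"
  proof
    assume "p1 = p2"
    then have "p1 div n = p2 div n" by simp
    then show False using i j ij unfolding p1_def p2_def by simp
  qed
  have vji: "v (j*n+i) = 0" using vv[OF i, of j] ij by simp
  have vij: "v (i*n+j) = 0" using vv[OF j, of i] ij by simp
  have vii: "v (i*n+i) = 1" using vv[OF i, of i] by simp
  have vjj: "v (j*n+j) = 1" using vv[OF j, of j] by simp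
  have Y11: "Y $$ (p1,p1) = 0" unfolding p1_def using Yent[OF j i j i] vji by (simp only:) simp
  have Y22: "Y $$ (p2,p2) = 0" unfolding p2_def using Yent[OF i j i j] vij by (simp only:) simp
  have Y12: "Y $$ (p1,p2) = z" unfolding p1_def p2_def z_def using Yent[OF j i i j] vii vjj by (simp only:) simp
  have Pij: "P $$ (i,j) = cnj z" using S i j unfolding psd_def z_def by blast
  have Y21: "Y $$ (p2,p1) = cnj z" unfolding p1_def p2_def using Yent[OF i j j i] vii vjj Pij by (simp only:) simp
  have "\<forall>x. let q = (\<Sum>p<n*n. \<Sum>q<n*n. cnj (x p) * Y $$ (p,q) * x q) in Im q = 0 \<and> Re q \<ge> 0"
    using Yp unfolding psd_def by blast
  then have "let q = (\<Sum>p<n*n. \<Sum>q<n*n. cnj ((\<lambda>p. if p = p1 then 1 else if p = p2 then - cnj z else 0) p) * Y $$ (p,q)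
            * (\<lambda>p. if p = p1 then 1 else if p = p2 then - cnj z else 0) q) in Im q = 0 \<and> Re q \<ge> 0"
    by (rule spec)
  then have "Re (Y $$ (p1,p1) - cnj z * Y $$ (p1,p2) - cnj (cnj z) * Y $$ (p2,p1) + cnj (cnj z) * cnj z * Y $$ (p2,p2)) \<ge> 0"
    unfolding Let_def quad2[OF p1 p2 p12] by blast
  then have "Re (- 2 * (cnj z * z)) \<ge> 0" using Y11 Y12 Y21 Y22 by (simp add: algebra_simps)
  then have "(Re z)^2 + (Im z)^2 \<le> 0" by (simp add: power2_eq_square)
  then have "Re z = 0 \<and> Im z = 0" by (simp only: sum_power2_le_zero_iff)
  then show "P $$ (i,j) = 0" using Pij by (simp add: complex_eq_iff)
qed

theorem mainTheorem8:
  fixes P :: "complex mat" and n :: nat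
  assumes "P \<in> carrier_mat n n"
  shows "PPT n (\<lambda>B. schur_prod P B) \<longleftrightarrow> psd n P \<and> diagonal_mat P"
proof
  assume "PPT n (\<lambda>B. schur_prod P B)"
  then have a: "completely_positive n (\<lambda>B. schur_prod P B)"
    and b: "completely_positive n (transpose_mat \<circ> (\<lambda>B. schur_prod P B))"
    unfolding PPT_def by auto
  have "psd n P" using nec_psd[OF assms a] .
  then show "psd n P \<and> diagonal_mat P" using nec_diag[OF assms _ b] by auto
next
  assume "psd n P \<and> diagonal_mat P"
  then show "PPT n (\<lambda>B. schur_prod P B)"
    unfolding PPT_def using suff[OF assms] by blast
qed

end
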